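(* Fix $b\in\mathbb{N}$. For $(r,s)\in L=\mathbb{N}\times\mathbb{N}$ define \[ \Lambda(r,s)=|\{(n,m)\in L : (n,m)\text{ is } b\text{-visible and } |n-r|+|m-s|=1\}|. \] Then the mean value $M(\Lambda)$ exists and $M(\Lambda)=\dfrac{4}{\zeta(b+1)}$, where $\zeta$ is the Riemann zeta function.
   Context: For $r,s\in\mathbb{N}$, $\gcd_b(r,s)=\max\{k\in\mathbb{N} : k\mid r \text{ and } k^b\mid s\}$; $(r,s)$ is $b$-visible if $\gcd_b(r,s)=1$. The mean value of $\Lambda:L\to\mathbb{C}$ is $M(\Lambda)=\lim_{N\to\infty}\frac{1}{N^2}\sum_{0<r,s\le N}\Lambda(r,s)$. *)

theory Defs
  imports "HOL-Analysis.Analysis"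
begin

definition gcd_b :: "nat \<Rightarrow> nat \<Rightarrow> nat \<Rightarrow> nat" where
  "gcd_b b r s = Max {k. 0 < k \<and> k dvd r \<and> k ^ b dvd s}"

definition b_visible :: "nat \<Rightarrow> nat \<Rightarrow> nat \<Rightarrow> bool" where
  "b_visible b r s \<longleftrightarrow> gcd_b b r s = 1"

definition Lambda :: "nat \<Rightarrow> nat \<Rightarrow> nat \<Rightarrow> nat" where
  "Lambda b r s = card {(n, m). 0 < n \<and> 0 < m \<and> b_visible b n m \<and>
       \<bar>int n - int r\<bar> + \<bar>int m - int s\<bar> = 1}"

definition zeta_nat :: "nat \<Rightarrow> real" where
  "zeta_nat s = (\<Sum>n. 1 / real (Suc n) ^ s)"

definition has_mean_value :: "(nat \<Rightarrow> nat \<Rightarrow> real) \<Rightarrow> real \<Rightarrow> bool" where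
  "has_mean_value f c \<longleftrightarrow>
     (\<lambda>N. (\<Sum>r\<in>{1..N}. \<Sum>s\<in>{1..N}. f r s) / real N ^ 2) \<longlonglongrightarrow> c"

end

theory Submission
  imports Defs "HOL-Computational_Algebra.Squarefree" "HOL-Real_Asymp.Real_Asymp"
begin
definition mu :: "nat \<Rightarrow> real" where
  "mu d = (if squarefree d then (-1) ^ card (prime_factors d) else 0)"

lemma mu_bound: "\<bar>mu d\<bar> \<le> 1"
  by (simp add: mu_def)

lemma mu_1 [simp]: "mu 1 = 1"
  by (simp add: mu_def)

lemma mu_mult_prime:
  assumes p: "prime p" and nd: "\<not> p dvd d" and d: "d > 0"
  shows "mu (p * d) = - mu d"
proof (cases "squarefree d")
  case True
  have cop: "coprime p d" using p nd by (simp add: prime_imp_coprime)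
  have sq: "squarefree (p * d)"
    by (rule squarefree_mult_coprime[OF cop squarefree_prime[OF p] True])
  have pf: "prime_factors (p * d) = insert p (prime_factors d)"
    using p d by (simp add: prime_factors_product prime_prime_factors)
  have "p \<notin> prime_factors d" using nd by (auto dest: in_prime_factors_imp_dvd)
  then have "card (prime_factors (p * d)) = Suc (card (prime_factors d))"
    by (simp add: pf)
  then show ?thesis using True sq by (simp add: mu_def)
next
  case False
  then have "\<not> squarefree (p * d)" using squarefree_multD(2) by blast
  then show ?thesis using False by (simp add: mu_def)
qed

lemma mu_sum:
  assumes n: "n > 0"
  shows "(\<Sum>d | d dvd n. mu d) = (if n = 1 then 1 else 0)"
proof (cases "n = 1")
  case True
  then show ?thesis by (simp add: mu_def)
next
  case False
  then obtain p where p: "prime p" "p dvd n" using n prime_factor_nat by blast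
  define D where "D = {d. d dvd n}"
  have finD: "finite D" using n by (simp add: D_def)
  define A where "A = {d\<in>D. \<not> p dvd d}"
  define B where "B = {d\<in>D. p dvd d}"
  have D: "D = A \<union> B" "A \<inter> B = {}" by (auto simp: A_def B_def)
  have fin: "finite A" "finite B" using finD by (auto simp: A_def B_def)
  have sub: "(*) p ` A \<subseteq> B"
  proof
    fix x assume "x \<in> (*) p ` A"
    then obtain d where d: "d \<in> A" "x = p * d" by auto
    have "coprime p d" using p d by (simp add: A_def prime_imp_coprime)
    then have "p * d dvd n" using d p by (simp add: A_def D_def divides_mult)
    then show "x \<in> B" using d by (simp add: B_def D_def)
  qed
  have zero: "mu x = 0" if "x \<in> B - (*) p ` A" for x
  proof -
    from that have x: "x dvd n" "p dvd x" "x \<notin> (*) p ` A" by (auto simp: B_def D_def)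
    then obtain e where e: "x = p * e" by (auto elim: dvdE)
    have "e dvd n" using x e by (metis dvd_mult_right)
    then have "p dvd e" using x e by (auto simp: A_def D_def)
    then have "p ^ 2 dvd x" using e by (auto simp: power2_eq_square)
    moreover have "\<not> p dvd 1" using p by (metis not_prime_unit)
    ultimately have "\<not> squarefree x" by (rule not_squarefreeI)
    then show ?thesis by (simp add: mu_def)
  qed
  have "(\<Sum>d\<in>B. mu d) = (\<Sum>d\<in>(*) p ` A. mu d)"
    by (rule sum.mono_neutral_right[OF fin(2) sub]) (use zero in auto)
  also have "\<dots> = (\<Sum>d\<in>A. mu (p * d))"
    using p by (subst sum.reindex) (auto simp: inj_on_def prime_gt_0_nat)
  also have "\<dots> = (\<Sum>d\<in>A. - mu d)"
  proof (rule sum.cong)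
    fix d assume "d \<in> A"
    then have "\<not> p dvd d" "d > 0" using n by (auto simp: A_def D_def intro: dvd_pos_nat)
    then show "mu (p * d) = - mu d" using mu_mult_prime p by blast
  qed simp
  finally have "(\<Sum>d\<in>B. mu d) = - (\<Sum>d\<in>A. mu d)" by (simp add: sum_negf)
  then have "(\<Sum>d\<in>D. mu d) = 0"
    using D fin by (simp add: sum.union_disjoint)
  then show ?thesis using False by (simp add: D_def)
qed

lemma lcm_pow_nat:
  fixes k g :: nat
  assumes "k > 0" "g > 0"
  shows "lcm k g ^ b = lcm (k ^ b) (g ^ b)"
proof -
  have "lcm (k ^ b) (g ^ b) * gcd (k ^ b) (g ^ b) = k ^ b * g ^ b"
    by (metis prod_gcd_lcm_nat mult.commute)
  also have "\<dots> = (lcm k g * gcd k g) ^ b" by (metis prod_gcd_lcm_nat mult.commute power_mult_distrib)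
  finally have "lcm (k ^ b) (g ^ b) * gcd k g ^ b = lcm k g ^ b * gcd k g ^ b"
    by (simp only: gcd_exp power_mult_distrib)
  moreover have "gcd k g ^ b > 0" using assms by simp
  ultimately show ?thesis by (metis mult_right_cancel not_gr0)
qed

lemma gcd_b_set:
  assumes n: "n > 0"
  shows "{k. 0 < k \<and> k dvd n \<and> k ^ b dvd m} = {k. k dvd gcd_b b n m}"
proof -
  let ?S = "{k. 0 < k \<and> k dvd n \<and> k ^ b dvd m}"
  have fin: "finite ?S"
    by (rule finite_subset[of _ "{k. k dvd n}"]) (use n in auto)
  have ne: "1 \<in> ?S" by simp
  then have ne': "?S \<noteq> {}" by blast
  define g where "g = gcd_b b n m"
  have gS: "g \<in> ?S" unfolding g_def gcd_b_def using Max_in[OF fin ne'] .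
  have ge: "k \<le> g" if "k \<in> ?S" for k unfolding g_def gcd_b_def using Max_ge[OF fin that] .
  show ?thesis
  proof (intro set_eqI iffI)
    fix k assume k: "k \<in> ?S"
    have l1: "lcm k g dvd n" using k gS by auto
    have "lcm k g ^ b = lcm (k ^ b) (g ^ b)" using k gS by (simp add: lcm_pow_nat)
    then have l2: "lcm k g ^ b dvd m" using k gS by auto
    have l0: "lcm k g > 0" using k gS by (auto simp: lcm_pos_nat)
    have "lcm k g \<in> ?S" using l0 l1 l2 by auto
    then have "lcm k g \<le> g" by (rule ge)
    moreover have "g dvd lcm k g" by simp
    moreover have "g \<le> lcm k g" using l0 \<open>g dvd lcm k g\<close> by (simp add: dvd_imp_le)
    ultimately have "lcm k g = g" by simp
    then show "k \<in> {k. k dvd gcd_b b n m}" by (metis dvd_lcm1 g_def mem_Collect_eq)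
  next
    fix k assume "k \<in> {k. k dvd gcd_b b n m}"
    then have k: "k dvd g" by (simp add: g_def)
    have "g > 0" using gS by simp
    then have "k > 0" using k by (auto intro: dvd_pos_nat)
    moreover have "k dvd n" using k gS by (auto intro: dvd_trans)
    moreover have "k ^ b dvd m" using k gS by (auto intro: dvd_trans dvd_power_same)
    ultimately show "k \<in> ?S" by simp
  qed
qed

lemma gcd_b_pos: "n > 0 \<Longrightarrow> gcd_b b n m > 0"
  using gcd_b_set[of n b m] by (metis (mono_tags, lifting) dvd_refl mem_Collect_eq)

definition chi :: "nat \<Rightarrow> nat \<Rightarrow> nat \<Rightarrow> real" where
  "chi b n m = (if 0 < n \<and> 0 < m \<and> b_visible b n m then 1 else 0)"

lemma chi_mu:
  assumes n: "n > 0" "n \<le> N" and m: "m > 0"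
  shows "chi b n m = (\<Sum>d\<in>{1..N}. if d dvd n \<and> d ^ b dvd m then mu d else 0)"
proof -
  have "(\<Sum>d\<in>{1..N}. if d dvd n \<and> d ^ b dvd m then mu d else 0)
      = (\<Sum>d\<in>{d\<in>{1..N}. d dvd n \<and> d ^ b dvd m}. mu d)"
    by (simp add: sum.inter_filter[symmetric])
  also have "{d\<in>{1..N}. d dvd n \<and> d ^ b dvd m} = {k. 0 < k \<and> k dvd n \<and> k ^ b dvd m}"
    using n by (auto dest: dvd_imp_le)
  also have "\<dots> = {k. k dvd gcd_b b n m}" using gcd_b_set[OF n(1)] .
  also have "(\<Sum>d\<in>\<dots>. mu d) = (if gcd_b b n m = 1 then 1 else 0)"
    by (rule mu_sum[OF gcd_b_pos[OF n(1)]])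
  finally show ?thesis using n m by (simp add: chi_def b_visible_def)
qed

lemma mult_set:
  fixes d N :: nat
  assumes d: "d > 0"
  shows "{n\<in>{1..N}. d dvd n} = (\<lambda>k. d * k) ` {1..N div d}"
proof (intro set_eqI iffI)
  fix n assume "n \<in> {n\<in>{1..N}. d dvd n}"
  then obtain k where k: "n = d * k" "1 \<le> d * k" "d * k \<le> N" by (auto elim!: dvdE)
  then have "k \<noteq> 0" using k(2) by (metis mult_0_right not_one_le_zero)
  then have "k \<ge> 1" by simp
  moreover have "k \<le> N div d" using div_le_mono[OF k(3), of d] d by simp
  ultimately show "n \<in> (\<lambda>k. d * k) ` {1..N div d}" using k by auto
next
  fix n assume "n \<in> (\<lambda>k. d * k) ` {1..N div d}"
  then obtain k where k: "n = d * k" "1 \<le> k" "k \<le> N div d"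
    by (metis (no_types, lifting) atLeastAtMost_iff imageE)
  have "d * k \<le> d * (N div d)" using k by simp
  also have "\<dots> \<le> N" by simp
  finally have "d * k \<le> N" .
  moreover have "1 \<le> d * k" using k d by simp
  ultimately show "n \<in> {n\<in>{1..N}. d dvd n}" using k by auto
qed

lemma sum_multiples:
  fixes f :: "nat \<Rightarrow> real" and d N :: nat
  assumes d: "d > 0"
  shows "(\<Sum>n\<in>{1..N}. if d dvd n then f n else 0) = (\<Sum>k\<in>{1..N div d}. f (d * k))"
proof -
  have "(\<Sum>n\<in>{1..N}. if d dvd n then f n else 0) = (\<Sum>n\<in>{n\<in>{1..N}. d dvd n}. f n)"
    by (simp add: sum.inter_filter[symmetric])
  also have "\<dots> = (\<Sum>n\<in>(\<lambda>k. d * k) ` {1..N div d}. f n)" by (simp only: mult_set[OF d])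
  also have "\<dots> = (\<Sum>k\<in>{1..N div d}. f (d * k))"
    using d by (subst sum.reindex) (auto simp: inj_on_def)
  finally show ?thesis .
qed

lemma count_multiples:
  fixes d N :: nat
  assumes d: "d > 0"
  shows "(\<Sum>n\<in>{1..N}. if d dvd n then 1 else 0) = real (N div d)"
  using sum_multiples[OF d, of "\<lambda>_. 1" N] by simp

definition W :: "nat \<Rightarrow> nat \<Rightarrow> real" where
  "W b N = (\<Sum>n\<in>{1..N}. \<Sum>m\<in>{1..N}. chi b n m)"

lemma W_formula:
  "W b N = (\<Sum>d\<in>{1..N}. mu d * real (N div d) * real (N div d ^ b))"
proof -
  have "W b N = (\<Sum>n\<in>{1..N}. \<Sum>m\<in>{1..N}. \<Sum>d\<in>{1..N}. if d dvd n \<and> d ^ b dvd m then mu d else 0)"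
    unfolding W_def by (intro sum.cong refl chi_mu) auto
  also have "\<dots> = (\<Sum>d\<in>{1..N}. \<Sum>n\<in>{1..N}. \<Sum>m\<in>{1..N}. if d dvd n \<and> d ^ b dvd m then mu d else 0)"
    by (subst sum.swap[of _ "{1..N}" "{1..N}"]) (rule sum.swap)
  also have "\<dots> = (\<Sum>d\<in>{1..N}. mu d * (\<Sum>n\<in>{1..N}. if d dvd n then 1 else 0) * (\<Sum>m\<in>{1..N}. if d ^ b dvd m then 1 else 0))"
  proof (rule sum.cong[OF refl])
    fix d
    have "(\<Sum>n\<in>{1..N}. \<Sum>m\<in>{1..N}. if d dvd n \<and> d ^ b dvd m then mu d else 0)
       = (\<Sum>n\<in>{1..N}. \<Sum>m\<in>{1..N}. mu d * ((if d dvd n then 1 else 0) * (if d ^ b dvd m then 1 else 0)))"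
      by (intro sum.cong refl) auto
    also have "\<dots> = mu d * ((\<Sum>n\<in>{1..N}. if d dvd n then 1 else 0) * (\<Sum>m\<in>{1..N}. if d ^ b dvd m then 1 else 0))"
      by (subst sum.swap) (simp add: sum_distrib_left sum_distrib_right)
    finally show "(\<Sum>n\<in>{1..N}. \<Sum>m\<in>{1..N}. if d dvd n \<and> d ^ b dvd m then mu d else 0) = mu d * (\<Sum>n\<in>{1..N}. if d dvd n then 1 else 0) * (\<Sum>m\<in>{1..N}. if d ^ b dvd m then 1 else 0)"
      by simp
  qed
  also have "\<dots> = (\<Sum>d\<in>{1..N}. mu d * real (N div d) * real (N div d ^ b))"
  proof (rule sum.cong[OF refl])
    fix d assume "d \<in> {1..N}"
    then have "d > 0" "d ^ b > 0" by auto
    then have c: "(\<Sum>n\<in>{1..N}. if d dvd n then 1 else 0) = real (N div d)"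
      "(\<Sum>m\<in>{1..N}. if d ^ b dvd m then 1 else 0) = real (N div d ^ b)"
      by (simp_all only: count_multiples)
    show "mu d * (\<Sum>n\<in>{1..N}. if d dvd n then 1 else 0) * (\<Sum>m\<in>{1..N}. if d ^ b dvd m then 1 else 0) = mu d * real (N div d) * real (N div d ^ b)"
      by (simp only: c)
  qed
  finally show ?thesis .
qed

lemma harm_over_n: "(\<lambda>N. harm N / real N :: real) \<longlonglongrightarrow> 0"
proof -
  have a: "(\<lambda>N. (harm N - ln (real N)) * (1 / real N) + ln (real N) / real N :: real) \<longlonglongrightarrow> euler_mascheroni * 0 + 0"
    by (intro tendsto_intros euler_mascheroni_LIMSEQ)
  have "(\<lambda>N. (harm N - ln (real N)) * (1 / real N) + ln (real N) / real N :: real) = (\<lambda>N. harm N / real N)"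
  proof (rule ext)
    fix N :: nat
    show "(harm N - ln (real N)) * (1 / real N) + ln (real N) / real N = harm N / real N"
      by (simp add: diff_divide_distrib)
  qed
  with a show ?thesis by simp
qed

lemma div_bounds:
  fixes N e :: nat
  assumes "e > 0"
  shows "real N / real e - 1 < real (N div e)" "real (N div e) \<le> real N / real e"
proof -
  have f: "real_of_int \<lfloor>real N / real e\<rfloor> = real (N div e)"
    by (metis floor_divide_of_nat_eq of_int_of_nat_eq)
  show "real N / real e - 1 < real (N div e)" using f floor_correct[of "real N / real e"] by linarith
  show "real (N div e) \<le> real N / real e" using f floor_correct[of "real N / real e"] by linarith
qed

lemma prod_err:
  fixes x y q1 q2 :: real
  assumes "x - 1 < q1" "q1 \<le> x" "y - 1 < q2" "q2 \<le> y" "0 \<le> q1" "0 \<le> q2"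
  shows "\<bar>q1 * q2 - x * y\<bar> \<le> x + y"
proof -
  have "x * y - q1 * q2 = x * (y - q2) + q2 * (x - q1)" by (simp add: algebra_simps)
  moreover have "0 \<le> x * (y - q2)" "x * (y - q2) \<le> x"
    using assms by (auto intro: mult_nonneg_nonneg mult_left_le)
  moreover have "0 \<le> q2 * (x - q1)" "q2 * (x - q1) \<le> y"
  proof -
    show "0 \<le> q2 * (x - q1)" using assms by simp
    have "q2 * (x - q1) \<le> q2 * 1" using assms by (intro mult_left_mono) auto
    then show "q2 * (x - q1) \<le> y" using assms by simp
  qed
  ultimately show ?thesis by linarith
qed

lemma term_err:
  fixes N d b :: nat
  assumes d: "d > 0" and b: "b \<ge> 1"
  shows "\<bar>real (N div d) * real (N div d ^ b) - real N ^ 2 / real d ^ Suc b\<bar> \<le> 2 * real N / real d"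
proof -
  have db: "d ^ b > 0" using d by simp
  note B1 = div_bounds[OF d, of N] and B2 = div_bounds[OF db, of N]
  have A: "\<bar>real (N div d) * real (N div d ^ b) - (real N / real d) * (real N / real (d ^ b))\<bar>
        \<le> real N / real d + real N / real (d ^ b)"
    by (rule prod_err) (use B1 B2 in auto)
  have E: "real N ^ 2 / real d ^ Suc b = (real N / real d) * (real N / real (d ^ b))"
    by (simp add: power2_eq_square)
  have C: "real N / real (d ^ b) \<le> real N / real d"
  proof -
    have "d \<le> d ^ b" using d b by (simp add: self_le_power)
    then show ?thesis using d by (simp add: frac_le)
  qed
  show ?thesis unfolding E using A C by linarith
qed

definition P :: "nat \<Rightarrow> nat \<Rightarrow> real" where
  "P b N = (\<Sum>d\<in>{1..N}. mu d / real d ^ Suc b)"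

lemma W_err:
  assumes b: "b \<ge> 1" and N: "N \<ge> 1"
  shows "\<bar>W b N / real N ^ 2 - P b N\<bar> \<le> 2 * harm N / real N"
proof -
  have eq: "W b N - real N ^ 2 * P b N =
     (\<Sum>d\<in>{1..N}. mu d * (real (N div d) * real (N div d ^ b) - real N ^ 2 / real d ^ Suc b))"
    unfolding W_formula P_def
    by (simp add: sum_distrib_left sum_subtractf[symmetric] algebra_simps)
  have "\<bar>W b N - real N ^ 2 * P b N\<bar> \<le>
      (\<Sum>d\<in>{1..N}. \<bar>mu d * (real (N div d) * real (N div d ^ b) - real N ^ 2 / real d ^ Suc b)\<bar>)"
    unfolding eq by (rule sum_abs)
  also have "\<dots> \<le> (\<Sum>d\<in>{1..N}. 2 * real N * inverse (real d))"
  proof (rule sum_mono)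
    fix d assume "d \<in> {1..N}"
    then have d: "d > 0" by simp
    have "\<bar>mu d * (real (N div d) * real (N div d ^ b) - real N ^ 2 / real d ^ Suc b)\<bar>
        = \<bar>mu d\<bar> * \<bar>real (N div d) * real (N div d ^ b) - real N ^ 2 / real d ^ Suc b\<bar>"
      by (simp add: abs_mult)
    also have "\<dots> \<le> 1 * (2 * real N / real d)"
      by (intro mult_mono mu_bound term_err[OF d b]) auto
    finally show "\<bar>mu d * (real (N div d) * real (N div d ^ b) - real N ^ 2 / real d ^ Suc b)\<bar>
        \<le> 2 * real N * inverse (real d)" by (simp add: divide_inverse)
  qed
  also have "\<dots> = 2 * real N * harm N"
    by (simp add: harm_def sum_distrib_left)
  finally have *: "\<bar>W b N - real N ^ 2 * P b N\<bar> \<le> 2 * real N * harm N" .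
  have Npos: "real N > 0" using N by simp
  have "W b N / real N ^ 2 - P b N = (W b N - real N ^ 2 * P b N) / real N ^ 2"
    using Npos by (simp add: field_simps)
  then have "\<bar>W b N / real N ^ 2 - P b N\<bar> = \<bar>W b N - real N ^ 2 * P b N\<bar> / real N ^ 2"
    by simp
  also have "\<dots> \<le> 2 * real N * harm N / real N ^ 2"
    using * Npos by (intro divide_right_mono) auto
  also have "\<dots> = 2 * harm N / real N"
    using Npos by (simp add: power2_eq_square)
  finally show ?thesis .
qed

lemma W_minus_P: 
  assumes b: "b \<ge> 1"
  shows "(\<lambda>N. W b N / real N ^ 2 - P b N) \<longlonglongrightarrow> 0"
proof -
  have "(\<lambda>N. 2 * (harm N / real N)) \<longlonglongrightarrow> 2 * 0"
    by (intro tendsto_intros harm_over_n)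
  then have lim: "(\<lambda>N. 2 * harm N / real N) \<longlonglongrightarrow> 0" by simp
  show ?thesis
  proof (rule Lim_null_comparison[OF _ lim])
    show "\<forall>\<^sub>F N in sequentially. norm (W b N / real N ^ 2 - P b N) \<le> 2 * harm N / real N"
      using eventually_ge_at_top[of 1] by eventually_elim (use W_err[OF b] in auto)
  qed
qed

lemma sum_shift1:
  fixes f :: "nat \<Rightarrow> real"
  shows "(\<Sum>d\<in>{1..N}. f d) = (\<Sum>n<N. f (Suc n))"
  by (induction N) (auto simp: atLeastAtMostSuc_conv)

lemma summable_mu:
  assumes b: "b \<ge> 1"
  shows "summable (\<lambda>n. mu (Suc n) / real (Suc n) ^ Suc b)"
proof (rule summable_comparison_test)
  have "summable (\<lambda>n. inverse (real n ^ Suc b))"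
    by (rule inverse_power_summable) (use b in auto)
  then show "summable (\<lambda>n. inverse (real (Suc n) ^ Suc b))"
    by (subst summable_Suc_iff)
  show "\<exists>N. \<forall>n\<ge>N. norm (mu (Suc n) / real (Suc n) ^ Suc b) \<le> inverse (real (Suc n) ^ Suc b)"
  proof (intro exI allI impI)
    fix n :: nat
    have "\<bar>mu (Suc n)\<bar> / real (Suc n) ^ Suc b \<le> 1 / real (Suc n) ^ Suc b"
      by (intro divide_right_mono mu_bound) simp
    then show "norm (mu (Suc n) / real (Suc n) ^ Suc b) \<le> inverse (real (Suc n) ^ Suc b)"
      by (simp add: divide_inverse abs_mult)
  qed
qed

definition Pinf :: "nat \<Rightarrow> real" where
  "Pinf b = (\<Sum>n. mu (Suc n) / real (Suc n) ^ Suc b)"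

lemma P_lim:
  assumes b: "b \<ge> 1"
  shows "P b \<longlonglongrightarrow> Pinf b"
proof -
  have "P b = (\<lambda>N. \<Sum>n<N. mu (Suc n) / real (Suc n) ^ Suc b)"
    unfolding P_def by (rule ext) (rule sum_shift1)
  then show ?thesis unfolding Pinf_def using summable_LIMSEQ[OF summable_mu[OF b]] by simp
qed

lemma W_lim:
  assumes b: "b \<ge> 1"
  shows "(\<lambda>N. W b N / real N ^ 2) \<longlonglongrightarrow> Pinf b"
proof -
  have "(\<lambda>N. (W b N / real N ^ 2 - P b N) + P b N) \<longlonglongrightarrow> 0 + Pinf b"
    by (intro tendsto_add W_minus_P P_lim b)
  then show ?thesis by simp
qed

lemma dirichlet_ident:
  fixes s D :: nat
  assumes D: "D \<ge> 1"
  shows "(\<Sum>d\<in>{1..D}. (mu d / real d ^ s) * (\<Sum>k\<in>{1..D div d}. 1 / real k ^ s)) = 1"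
proof -
  have "(\<Sum>n\<in>{1..D}. (1 / real n ^ s) * (\<Sum>d | d dvd n. mu d)) = (\<Sum>n\<in>{1..D}. if n = 1 then 1 else 0)"
    by (intro sum.cong refl) (simp add: mu_sum)
  also have "\<dots> = 1" using D by simp
  finally have one: "(\<Sum>n\<in>{1..D}. (1 / real n ^ s) * (\<Sum>d | d dvd n. mu d)) = 1" .
  have two: "(\<Sum>d | d dvd n. mu d) = (\<Sum>d\<in>{1..D}. if d dvd n then mu d else 0)" if n: "n \<in> {1..D}" for n
  proof -
    have e: "{d. d dvd n} = {d\<in>{1..D}. d dvd n}"
      using n by (auto dest: dvd_imp_le intro: dvd_pos_nat)
    show ?thesis by (subst e, rule sum.inter_filter) simp
  qed
  have three: "(\<Sum>n\<in>{1..D}. (1 / real n ^ s) * (\<Sum>d | d dvd n. mu d)) = (\<Sum>n\<in>{1..D}. \<Sum>d\<in>{1..D}. if d dvd n then mu d / real n ^ s else 0)"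
  proof (rule sum.cong[OF refl])
    fix n assume n: "n \<in> {1..D}"
    have "(1 / real n ^ s) * (\<Sum>d | d dvd n. mu d) = (1 / real n ^ s) * (\<Sum>d\<in>{1..D}. if d dvd n then mu d else 0)"
      by (simp only: two[OF n])
    also have "\<dots> = (\<Sum>d\<in>{1..D}. (1 / real n ^ s) * (if d dvd n then mu d else 0))"
      by (rule sum_distrib_left)
    also have "\<dots> = (\<Sum>d\<in>{1..D}. if d dvd n then mu d / real n ^ s else 0)"
      by (intro sum.cong refl) simp
    finally show "(1 / real n ^ s) * (\<Sum>d | d dvd n. mu d) = (\<Sum>d\<in>{1..D}. if d dvd n then mu d / real n ^ s else 0)" .
  qed
  have "(\<Sum>n\<in>{1..D}. \<Sum>d\<in>{1..D}. if d dvd n then mu d / real n ^ s else 0) = (\<Sum>d\<in>{1..D}. \<Sum>n\<in>{1..D}. if d dvd n then mu d / real n ^ s else 0)"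
    by (rule sum.swap)
  also have "\<dots> = (\<Sum>d\<in>{1..D}. \<Sum>k\<in>{1..D div d}. mu d / real (d * k) ^ s)"
  proof (rule sum.cong[OF refl])
    fix d assume "d \<in> {1..D}"
    then have d: "d > 0" by simp
    show "(\<Sum>n\<in>{1..D}. if d dvd n then mu d / real n ^ s else 0) = (\<Sum>k\<in>{1..D div d}. mu d / real (d * k) ^ s)"
      by (rule sum_multiples[OF d, of "\<lambda>n. mu d / real n ^ s"])
  qed
  also have "\<dots> = (\<Sum>d\<in>{1..D}. (mu d / real d ^ s) * (\<Sum>k\<in>{1..D div d}. 1 / real k ^ s))"
    by (simp add: sum_distrib_left power_mult_distrib)
  finally show ?thesis using one three by simp
qed

lemma summable_zeta:
  assumes s: "s \<ge> 2"
  shows "summable (\<lambda>n. 1 / real (Suc n) ^ s)"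
proof -
  have "summable (\<lambda>n. inverse (real n ^ s))"
    by (rule inverse_power_summable[OF s])
  then have "summable (\<lambda>n. inverse (real (Suc n) ^ s))"
    by (subst summable_Suc_iff)
  then show ?thesis by (simp add: divide_inverse)
qed

lemma zeta_tail:
  assumes s: "s \<ge> 2" and K: "K \<ge> 1"
  shows "0 \<le> zeta_nat s - (\<Sum>k\<in>{1..K}. 1 / real k ^ s)"
        "zeta_nat s - (\<Sum>k\<in>{1..K}. 1 / real k ^ s) \<le> 1 / real K"
proof -
  define g where "g n = 1 / real (Suc n) ^ s" for n
  have sg: "summable g" unfolding g_def by (rule summable_zeta[OF s])
  have Z: "zeta_nat s = (\<Sum>n. g n)" by (simp add: zeta_nat_def g_def)
  have fin: "(\<Sum>k\<in>{1..K}. 1 / real k ^ s) = (\<Sum>n<K. g n)"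
    unfolding g_def by (rule sum_shift1)
  have split: "zeta_nat s = (\<Sum>n. g (n + K)) + (\<Sum>n<K. g n)"
    unfolding Z by (rule suminf_split_initial_segment[OF sg])
  have sgK: "summable (\<lambda>n. g (n + K))" by (rule summable_ignore_initial_segment[OF sg])
  have tail_eq: "zeta_nat s - (\<Sum>k\<in>{1..K}. 1 / real k ^ s) = (\<Sum>n. g (n + K))"
    using split fin by simp
  show "0 \<le> zeta_nat s - (\<Sum>k\<in>{1..K}. 1 / real k ^ s)"
    unfolding tail_eq by (rule suminf_nonneg[OF sgK]) (simp add: g_def)
  define h where "h n = 1 / real (n + K)" for n
  have hlim: "h \<longlonglongrightarrow> 0" unfolding h_def by real_asymp
  have tel: "(\<lambda>n. h n - h (Suc n)) sums (h 0 - 0)"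
    by (rule telescope_sums'[OF hlim])
  have le: "g (n + K) \<le> h n - h (Suc n)" for n
  proof -
    define x where "x = real (n + K)"
    have x1: "x \<ge> 1" using K by (simp add: x_def)
    have "h n - h (Suc n) = 1 / (x * (x + 1))"
      using x1 by (simp add: h_def x_def field_simps)
    moreover have "g (n + K) = 1 / (x + 1) ^ s"
      by (simp add: g_def x_def add_ac)
    moreover have "x * (x + 1) \<le> (x + 1) ^ s"
    proof -
      have "x * (x + 1) \<le> (x + 1) ^ 2" using x1 by (simp add: power2_eq_square)
      also have "\<dots> \<le> (x + 1) ^ s" using x1 s by (intro power_increasing) auto
      finally show ?thesis .
    qed
    moreover have "0 < x * (x + 1)" using x1 by simp
    ultimately show ?thesis by (simp add: frac_le)
  qed
  have "(\<Sum>n. g (n + K)) \<le> (\<Sum>n. h n - h (Suc n))"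
    by (rule suminf_le[OF le sgK]) (use tel in \<open>simp add: sums_iff\<close>)
  also have "\<dots> = h 0" using tel by (simp add: sums_iff)
  also have "\<dots> = 1 / real K" by (simp add: h_def)
  finally show "zeta_nat s - (\<Sum>k\<in>{1..K}. 1 / real k ^ s) \<le> 1 / real K"
    unfolding tail_eq .
qed

lemma dir_err:
  assumes b: "b \<ge> 1" and D: "D \<ge> 1"
  shows "\<bar>P b D * zeta_nat (Suc b) - 1\<bar> \<le> 2 * harm D / real D"
proof -
  define s where "s = Suc b"
  have s2: "s \<ge> 2" using b by (simp add: s_def)
  define Z where "Z = zeta_nat s"
  define T where "T d = Z - (\<Sum>k\<in>{1..D div d}. 1 / real k ^ s)" for d
  have "P b D * Z - 1 = (\<Sum>d\<in>{1..D}. (mu d / real d ^ s) * Z)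
        - (\<Sum>d\<in>{1..D}. (mu d / real d ^ s) * (\<Sum>k\<in>{1..D div d}. 1 / real k ^ s))"
    using dirichlet_ident[OF D, of s] by (simp add: P_def s_def sum_distrib_right)
  also have "\<dots> = (\<Sum>d\<in>{1..D}. (mu d / real d ^ s) * T d)"
    by (simp add: T_def sum_subtractf[symmetric] right_diff_distrib)
  finally have eq: "P b D * Z - 1 = (\<Sum>d\<in>{1..D}. (mu d / real d ^ s) * T d)" .
  have Dpos: "real D > 0" using D by simp
  have "\<bar>P b D * Z - 1\<bar> \<le> (\<Sum>d\<in>{1..D}. \<bar>(mu d / real d ^ s) * T d\<bar>)"
    unfolding eq by (rule sum_abs)
  also have "\<dots> \<le> (\<Sum>d\<in>{1..D}. (2 / real D) * inverse (real d))"
  proof (rule sum_mono)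
    fix d assume dD: "d \<in> {1..D}"
    then have d: "d \<ge> 1" "d \<le> D" by auto
    define q where "q = D div d"
    have q1: "q \<ge> 1" using div_le_mono[OF d(2), of d] d by (simp add: q_def)
    have Dq: "real D \<le> 2 * real d * real q"
    proof -
      have "D = d * q + D mod d" by (simp add: q_def)
      moreover have "D mod d < d" using d by simp
      moreover have "d \<le> d * q" using q1 by simp
      ultimately have "D \<le> 2 * (d * q)" by linarith
      then have "real D \<le> real (2 * (d * q))" by (simp only: of_nat_le_iff)
      then show ?thesis by simp
    qed
    have T: "0 \<le> T d" "T d \<le> 1 / real q"
      using zeta_tail[OF s2 q1] by (simp_all add: T_def Z_def q_def)
    have dd: "real d ^ 2 \<le> real d ^ s" using d s2 by (intro power_increasing) auto
    have m: "\<bar>mu d / real d ^ s\<bar> \<le> 1 / real d ^ 2"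
    proof -
      have "\<bar>mu d / real d ^ s\<bar> = \<bar>mu d\<bar> / real d ^ s" by (simp add: abs_div)
      also have "\<dots> \<le> 1 / real d ^ s" using d by (intro divide_right_mono mu_bound) auto
      also have "\<dots> \<le> 1 / real d ^ 2" using d dd by (intro frac_le) auto
      finally show ?thesis .
    qed
    have "\<bar>(mu d / real d ^ s) * T d\<bar> = \<bar>mu d / real d ^ s\<bar> * T d"
      using T by (simp add: abs_mult)
    also have "\<dots> \<le> (1 / real d ^ 2) * (1 / real q)"
      using m T by (intro mult_mono) auto
    also have "\<dots> = 2 / (2 * real d ^ 2 * real q)" by simp
    also have "\<dots> \<le> 2 / (real d * real D)"
    proof (rule frac_le)
      show "0 < real d * real D" using d by simp
      have "real d * real D \<le> real d * (2 * real d * real q)"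
        using Dq d by (intro mult_left_mono) auto
      then show "real d * real D \<le> 2 * real d ^ 2 * real q" by (simp add: power2_eq_square algebra_simps)
    qed auto
    also have "\<dots> = (2 / real D) * inverse (real d)" by (simp add: field_simps)
    finally show "\<bar>(mu d / real d ^ s) * T d\<bar> \<le> (2 / real D) * inverse (real d)" .
  qed
  also have "\<dots> = 2 * harm D / real D"
    by (simp add: harm_def sum_distrib_left[symmetric] sum_divide_distrib[symmetric])
  finally show ?thesis by (simp add: Z_def s_def)
qed

lemma Pinf_zeta:
  assumes b: "b \<ge> 1"
  shows "Pinf b * zeta_nat (Suc b) = 1"
proof -
  have "(\<lambda>D. 2 * (harm D / real D)) \<longlonglongrightarrow> 2 * 0"
    by (intro tendsto_intros harm_over_n)
  then have lim: "(\<lambda>D. 2 * harm D / real D) \<longlonglongrightarrow> 0" by simp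
  have "(\<lambda>D. P b D * zeta_nat (Suc b) - 1) \<longlonglongrightarrow> 0"
  proof (rule Lim_null_comparison[OF _ lim])
    show "\<forall>\<^sub>F D in sequentially. norm (P b D * zeta_nat (Suc b) - 1) \<le> 2 * harm D / real D"
      using eventually_ge_at_top[of 1] by eventually_elim (use dir_err[OF b] in auto)
  qed
  then have "(\<lambda>D. (P b D * zeta_nat (Suc b) - 1) + 1) \<longlonglongrightarrow> 0 + 1"
    by (intro tendsto_add) auto
  then have l1: "(\<lambda>D. P b D * zeta_nat (Suc b)) \<longlonglongrightarrow> 1" by simp
  have l2: "(\<lambda>D. P b D * zeta_nat (Suc b)) \<longlonglongrightarrow> Pinf b * zeta_nat (Suc b)"
    by (intro tendsto_mult_right P_lim b)
  show ?thesis using LIMSEQ_unique[OF l2 l1] .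
qed

lemma adj_iff:
  assumes r: "r \<ge> 1" and s: "s \<ge> 1"
  shows "(\<bar>int n - int r\<bar> + \<bar>int m - int s\<bar> = 1) \<longleftrightarrow>
         (n, m) \<in> {(r + 1, s), (r - 1, s), (r, s + 1), (r, s - 1)}"
  using r s by (auto simp: abs_if split: if_splits) 

lemma Lambda_eq:
  assumes r: "r \<ge> 1" and s: "s \<ge> 1"
  shows "real (Lambda b r s) = chi b (r + 1) s + chi b (r - 1) s + chi b r (s + 1) + chi b r (s - 1)"
proof -
  define Q where "Q = {(r + 1, s), (r - 1, s), (r, s + 1), (r, s - 1)}"
  define Pr where "Pr x = (0 < fst x \<and> 0 < snd x \<and> b_visible b (fst x) (snd x))" for x
  have set: "{(n, m). 0 < n \<and> 0 < m \<and> b_visible b n m \<and>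
       \<bar>int n - int r\<bar> + \<bar>int m - int s\<bar> = 1} = {x\<in>Q. Pr x}"
    using adj_iff[OF r s] by (auto simp: Q_def Pr_def)
  have finQ: "finite Q" by (simp add: Q_def)
  have "real (card {x\<in>Q. Pr x}) = (\<Sum>x\<in>{x\<in>Q. Pr x}. 1)" by simp
  also have "\<dots> = (\<Sum>x\<in>Q. if Pr x then 1 else 0)"
    by (rule sum.inter_filter[OF finQ])
  also have "\<dots> = chi b (r + 1) s + chi b (r - 1) s + chi b r (s + 1) + chi b r (s - 1)"
    using r s by (simp add: Q_def Pr_def chi_def)
  finally show ?thesis unfolding Lambda_def set .
qed

lemma shift_up:
  fixes h :: "nat \<Rightarrow> real"
  shows "(\<Sum>r\<in>{1..N}. h (Suc r)) = (\<Sum>r\<in>{1..N}. h r) + h (Suc N) - h 1"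
  by (induction N) (simp_all add: atLeastAtMostSuc_conv)

lemma shift_down:
  fixes h :: "nat \<Rightarrow> real"
  shows "(\<Sum>r\<in>{1..N}. h (r - 1)) = (\<Sum>r\<in>{1..N}. h r) + h 0 - h N"
  by (induction N) (simp_all add: atLeastAtMostSuc_conv)

lemma chi_01: "0 \<le> chi b n m" "chi b n m \<le> 1"
  by (simp_all add: chi_def)

lemma inner_bound:
  fixes F :: "nat \<Rightarrow> nat \<Rightarrow> real"
  assumes F: "\<And>n m. 0 \<le> F n m \<and> F n m \<le> 1"
  shows "\<bar>(\<Sum>r\<in>{1..N}. \<Sum>s\<in>{1..N}. F r (Suc s)) - (\<Sum>r\<in>{1..N}. \<Sum>s\<in>{1..N}. F r s)\<bar> \<le> real N"
        "\<bar>(\<Sum>r\<in>{1..N}. \<Sum>s\<in>{1..N}. F r (s - 1)) - (\<Sum>r\<in>{1..N}. \<Sum>s\<in>{1..N}. F r s)\<bar> \<le> real N"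
proof -
  have "\<bar>(\<Sum>r\<in>{1..N}. \<Sum>s\<in>{1..N}. F r (Suc s)) - (\<Sum>r\<in>{1..N}. \<Sum>s\<in>{1..N}. F r s)\<bar>
      = \<bar>\<Sum>r\<in>{1..N}. F r (Suc N) - F r 1\<bar>"
  proof -
    have e: "(\<Sum>s\<in>{1..N}. F r (Suc s)) - (\<Sum>s\<in>{1..N}. F r s) = F r (Suc N) - F r 1" for r
      using shift_up[of "F r" N] by simp
    have "(\<Sum>r\<in>{1..N}. \<Sum>s\<in>{1..N}. F r (Suc s)) - (\<Sum>r\<in>{1..N}. \<Sum>s\<in>{1..N}. F r s)
       = (\<Sum>r\<in>{1..N}. (\<Sum>s\<in>{1..N}. F r (Suc s)) - (\<Sum>s\<in>{1..N}. F r s))"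
      by (rule sum_subtractf[symmetric])
    also have "\<dots> = (\<Sum>r\<in>{1..N}. F r (Suc N) - F r 1)" by (simp only: e)
    finally show ?thesis by simp
  qed
  also have "\<dots> \<le> (\<Sum>r\<in>{1..N}. \<bar>F r (Suc N) - F r 1\<bar>)" by (rule sum_abs)
  also have "\<dots> \<le> (\<Sum>r\<in>{1..N}. 1)"
    by (intro sum_mono) (use F in \<open>smt (verit)\<close>)
  finally show "\<bar>(\<Sum>r\<in>{1..N}. \<Sum>s\<in>{1..N}. F r (Suc s)) - (\<Sum>r\<in>{1..N}. \<Sum>s\<in>{1..N}. F r s)\<bar> \<le> real N"
    by simp
  have "\<bar>(\<Sum>r\<in>{1..N}. \<Sum>s\<in>{1..N}. F r (s - 1)) - (\<Sum>r\<in>{1..N}. \<Sum>s\<in>{1..N}. F r s)\<bar>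
      = \<bar>\<Sum>r\<in>{1..N}. F r 0 - F r N\<bar>"
  proof -
    have e: "(\<Sum>s\<in>{1..N}. F r (s - 1)) - (\<Sum>s\<in>{1..N}. F r s) = F r 0 - F r N" for r
      using shift_down[of "F r" N] by simp
    have "(\<Sum>r\<in>{1..N}. \<Sum>s\<in>{1..N}. F r (s - 1)) - (\<Sum>r\<in>{1..N}. \<Sum>s\<in>{1..N}. F r s)
       = (\<Sum>r\<in>{1..N}. (\<Sum>s\<in>{1..N}. F r (s - 1)) - (\<Sum>s\<in>{1..N}. F r s))"
      by (rule sum_subtractf[symmetric])
    also have "\<dots> = (\<Sum>r\<in>{1..N}. F r 0 - F r N)" by (simp only: e)
    finally show ?thesis by simp
  qed
  also have "\<dots> \<le> (\<Sum>r\<in>{1..N}. \<bar>F r 0 - F r N\<bar>)" by (rule sum_abs)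
  also have "\<dots> \<le> (\<Sum>r\<in>{1..N}. 1)"
    by (intro sum_mono) (use F in \<open>smt (verit)\<close>)
  finally show "\<bar>(\<Sum>r\<in>{1..N}. \<Sum>s\<in>{1..N}. F r (s - 1)) - (\<Sum>r\<in>{1..N}. \<Sum>s\<in>{1..N}. F r s)\<bar> \<le> real N"
    by simp
qed

lemma S_bound:
  "\<bar>(\<Sum>r\<in>{1..N}. \<Sum>s\<in>{1..N}. real (Lambda b r s)) - 4 * W b N\<bar> \<le> 4 * real N"
proof -
  define A1 where "A1 = (\<Sum>r\<in>{1..N}. \<Sum>s\<in>{1..N}. chi b (Suc r) s)"
  define A2 where "A2 = (\<Sum>r\<in>{1..N}. \<Sum>s\<in>{1..N}. chi b (r - 1) s)"
  define A3 where "A3 = (\<Sum>r\<in>{1..N}. \<Sum>s\<in>{1..N}. chi b r (Suc s))"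
  define A4 where "A4 = (\<Sum>r\<in>{1..N}. \<Sum>s\<in>{1..N}. chi b r (s - 1))"
  have "(\<Sum>r\<in>{1..N}. \<Sum>s\<in>{1..N}. real (Lambda b r s))
     = (\<Sum>r\<in>{1..N}. \<Sum>s\<in>{1..N}. chi b (Suc r) s + chi b (r - 1) s + chi b r (Suc s) + chi b r (s - 1))"
    by (intro sum.cong refl) (simp add: Lambda_eq)
  also have "\<dots> = A1 + A2 + A3 + A4"
    by (simp add: A1_def A2_def A3_def A4_def sum.distrib)
  finally have S: "(\<Sum>r\<in>{1..N}. \<Sum>s\<in>{1..N}. real (Lambda b r s)) = A1 + A2 + A3 + A4" .
  have F: "\<And>n m. 0 \<le> chi b n m \<and> chi b n m \<le> 1" by (simp add: chi_01)
  have G: "\<And>n m. 0 \<le> chi b m n \<and> chi b m n \<le> 1" by (simp add: chi_01)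
  have Wsw: "(\<Sum>s\<in>{1..N}. \<Sum>r\<in>{1..N}. chi b r s) = W b N"
    unfolding W_def by (rule sum.swap)
  have b3: "\<bar>A3 - W b N\<bar> \<le> real N" unfolding A3_def W_def by (rule inner_bound(1)[OF F])
  have b4: "\<bar>A4 - W b N\<bar> \<le> real N" unfolding A4_def W_def by (rule inner_bound(2)[OF F])
  have A1s: "A1 = (\<Sum>s\<in>{1..N}. \<Sum>r\<in>{1..N}. chi b (Suc r) s)" unfolding A1_def by (rule sum.swap)
  have A2s: "A2 = (\<Sum>s\<in>{1..N}. \<Sum>r\<in>{1..N}. chi b (r - 1) s)" unfolding A2_def by (rule sum.swap)
  have b1: "\<bar>A1 - W b N\<bar> \<le> real N"
    unfolding A1s Wsw[symmetric] using inner_bound(1)[of "\<lambda>s r. chi b r s", OF G] by simp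
  have b2: "\<bar>A2 - W b N\<bar> \<le> real N"
    unfolding A2s Wsw[symmetric] using inner_bound(2)[of "\<lambda>s r. chi b r s", OF G] by simp
  show ?thesis unfolding S using b1 b2 b3 b4 by linarith
qed

theorem mainTheorem7:
  fixes b :: nat
  assumes "b \<ge> 1"
  shows "has_mean_value (\<lambda>r s. real (Lambda b r s)) (4 / zeta_nat (b + 1))"
proof -
  have b: "b \<ge> 1" by fact
  have PZ: "Pinf b * zeta_nat (Suc b) = 1" by (rule Pinf_zeta[OF b])
  have nz: "zeta_nat (Suc b) \<noteq> 0" using PZ by auto
  have "Pinf b = 1 / zeta_nat (Suc b)" using PZ nz by (simp add: eq_divide_eq)
  then have val: "4 / zeta_nat (b + 1) = 4 * Pinf b" by simp
  have lim4: "(\<lambda>N. 4 * (W b N / real N ^ 2)) \<longlonglongrightarrow> 4 * Pinf b"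
    by (intro tendsto_intros W_lim b)
  have l0: "(\<lambda>N. 4 / real N) \<longlonglongrightarrow> 0" by real_asymp
  have diff: "(\<lambda>N. (\<Sum>r\<in>{1..N}. \<Sum>s\<in>{1..N}. real (Lambda b r s)) / real N ^ 2 - 4 * (W b N / real N ^ 2)) \<longlonglongrightarrow> 0"
  proof (rule Lim_null_comparison[OF _ l0])
    show "\<forall>\<^sub>F N in sequentially. norm ((\<Sum>r\<in>{1..N}. \<Sum>s\<in>{1..N}. real (Lambda b r s)) / real N ^ 2 - 4 * (W b N / real N ^ 2)) \<le> 4 / real N"
      using eventually_ge_at_top[of "1::nat"]
    proof eventually_elim
      case (elim N)
      have Np: "real N > 0" using elim by simp
      have "(\<Sum>r\<in>{1..N}. \<Sum>s\<in>{1..N}. real (Lambda b r s)) / real N ^ 2 - 4 * (W b N / real N ^ 2)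
          = ((\<Sum>r\<in>{1..N}. \<Sum>s\<in>{1..N}. real (Lambda b r s)) - 4 * W b N) / real N ^ 2"
        by (simp add: diff_divide_distrib)
      then have "norm ((\<Sum>r\<in>{1..N}. \<Sum>s\<in>{1..N}. real (Lambda b r s)) / real N ^ 2 - 4 * (W b N / real N ^ 2))
          = \<bar>(\<Sum>r\<in>{1..N}. \<Sum>s\<in>{1..N}. real (Lambda b r s)) - 4 * W b N\<bar> / real N ^ 2"
        by simp
      also have "\<dots> \<le> 4 * real N / real N ^ 2"
        using S_bound[of b N] Np by (intro divide_right_mono) auto
      also have "\<dots> = 4 / real N" using Np by (simp add: power2_eq_square)
      finally show ?case .
    qed
  qed
  have "(\<lambda>N. ((\<Sum>r\<in>{1..N}. \<Sum>s\<in>{1..N}. real (Lambda b r s)) / real N ^ 2 - 4 * (W b N / real N ^ 2))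
            + 4 * (W b N / real N ^ 2)) \<longlonglongrightarrow> 0 + 4 * Pinf b"
    by (intro tendsto_add diff lim4)
  then have "(\<lambda>N. (\<Sum>r\<in>{1..N}. \<Sum>s\<in>{1..N}. real (Lambda b r s)) / real N ^ 2) \<longlonglongrightarrow> 4 * Pinf b"
    by simp
  then show ?thesis unfolding has_mean_value_def val .
qed

end
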